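(* Let $a=\sum_{t=0}^7a_te_t\in C\ell_{1,2}$ be nonzero with $P(a)=0$, let $K=a_0^2+a_2^2+a_4^2+a_6^2$ and $x=\frac{a'}{4K}$. Then $axa=a$, $xax=x$, $(ax)'=ax$ and $(xa)'=xa$.
   Context: $C\ell_{1,2}$ is the real Clifford algebra generated by $i_1,i_2,i_3$ with $i_1^2=1$, $i_2^2=i_3^2=-1$ and $i_ti_m=-i_mi_t$ for $t\neq m$, with real basis $e_0=1$, $e_1=i_1$, $e_2=i_2$, $e_3=i_1i_2$, $e_4=i_3$, $e_5=i_1i_3$, $e_6=i_2i_3$, $e_7=i_1i_2i_3$. For $a=\sum a_te_t$: the prime is $a'=a_0+a_1e_1-a_2e_2+a_3e_3-a_4e_4+a_5e_5-a_6e_6-a_7e_7$; $N(a)=a_0^2-a_1^2+a_2^2-a_3^2+a_4^2-a_5^2+a_6^2-a_7^2$, $T(a)=a_0a_7+a_2a_5-a_1a_6-a_3a_4$, $P(a)=N(a)^2+4T(a)^2$. *)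

theory Defs
  imports Main "HOL.Real"
begin

text \<open>Elements of the real Clifford algebra Cl(1,2), written in the basis
  e0=1, e1=i1, e2=i2, e3=i1 i2, e4=i3, e5=i1 i3, e6=i2 i3, e7=i1 i2 i3,
  with i1^2 = 1, i2^2 = i3^2 = -1 and anticommuting generators.\<close>

datatype cl12 = CL (c0: real) (c1: real) (c2: real) (c3: real)
                   (c4: real) (c5: real) (c6: real) (c7: real)

definition cl_zero :: cl12 where
  "cl_zero = CL 0 0 0 0 0 0 0 0"

definition cl_scale :: "real \<Rightarrow> cl12 \<Rightarrow> cl12" where
  "cl_scale r a = CL (r * c0 a) (r * c1 a) (r * c2 a) (r * c3 a)
                     (r * c4 a) (r * c5 a) (r * c6 a) (r * c7 a)"

text \<open>Clifford product, obtained by bilinear extension of the products of basis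
  blades (e_A e_B = sign * e_(A xor B), basis indices read as bitmasks over i1,i2,i3).\<close>
fun cl_mult :: "cl12 \<Rightarrow> cl12 \<Rightarrow> cl12" (infixl "\<odot>" 70) where
  "cl_mult (CL a0 a1 a2 a3 a4 a5 a6 a7) (CL b0 b1 b2 b3 b4 b5 b6 b7) =
    CL
( a0 * b0 + a1 * b1 - a2 * b2 + a3 * b3 - a4 * b4 + a5 * b5 - a6 * b6 - a7 * b7)
     ( a0 * b1 + a1 * b0 + a2 * b3 - a3 * b2 + a4 * b5 - a5 * b4 - a6 * b7 - a7 * b6)
     ( a0 * b2 + a1 * b3 + a2 * b0 - a3 * b1 + a4 * b6 - a5 * b7 - a6 * b4 - a7 * b5)
     ( a0 * b3 + a1 * b2 - a2 * b1 + a3 * b0 - a4 * b7 + a5 * b6 - a6 * b5 - a7 * b4)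
     ( a0 * b4 + a1 * b5 - a2 * b6 + a3 * b7 + a4 * b0 - a5 * b1 + a6 * b2 + a7 * b3)
     ( a0 * b5 + a1 * b4 + a2 * b7 - a3 * b6 - a4 * b1 + a5 * b0 + a6 * b3 + a7 * b2)
     ( a0 * b6 + a1 * b7 + a2 * b4 - a3 * b5 - a4 * b2 + a5 * b3 + a6 * b0 + a7 * b1)
     ( a0 * b7 + a1 * b6 - a2 * b5 + a3 * b4 + a4 * b3 - a5 * b2 + a6 * b1 + a7 * b0)"

definition cl_prime :: "cl12 \<Rightarrow> cl12" where
  "cl_prime a = CL (c0 a) (c1 a) (- c2 a) (c3 a) (- c4 a) (c5 a) (- c6 a) (- c7 a)"

definition cl_N :: "cl12 \<Rightarrow> real" where
  "cl_N a = (c0 a)^2 - (c1 a)^2 + (c2 a)^2 - (c3 a)^2 + (c4 a)^2 - (c5 a)^2 + (c6 a)^2 - (c7 a)^2"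

definition cl_T :: "cl12 \<Rightarrow> real" where
  "cl_T a = c0 a * c7 a + c2 a * c5 a - c1 a * c6 a - c3 a * c4 a"

definition cl_P :: "cl12 \<Rightarrow> real" where
  "cl_P a = (cl_N a)^2 + 4 * (cl_T a)^2"

end

theory Submission
  imports Defs
begin

lemma PN: "cl_P a = 0 \<Longrightarrow> cl_N a = 0 \<and> cl_T a = 0"
  unfolding cl_P_def by (smt (verit) zero_le_power2 power2_eq_square mult_eq_0_iff)

lemma sq4: "(x::real)^2 + y^2 + z^2 + w^2 = 0 \<Longrightarrow> x = 0 \<and> y = 0 \<and> z = 0 \<and> w = 0"
  by (smt (verit) zero_le_power2 power2_eq_square mult_eq_0_iff)

theorem lemma3p4:
  fixes a :: cl12
  assumes "a \<noteq> cl_zero"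
    and "cl_P a = 0"
  defines "K \<equiv> (c0 a)^2 + (c2 a)^2 + (c4 a)^2 + (c6 a)^2"
  defines "x \<equiv> cl_scale (1 / (4 * K)) (cl_prime a)"
  shows "a \<odot> x \<odot> a = a \<and> x \<odot> a \<odot> x = x \<and>
         cl_prime (a \<odot> x) = a \<odot> x \<and> cl_prime (x \<odot> a) = x \<odot> a"
proof -
  obtain a0 a1 a2 a3 a4 a5 a6 a7 where A: "a = CL a0 a1 a2 a3 a4 a5 a6 a7" by (cases a)
  have NT: "cl_N a = 0" "cl_T a = 0" using PN[OF assms(2)] by auto
  hence N: "a0^2 - a1^2 + a2^2 - a3^2 + a4^2 - a5^2 + a6^2 - a7^2 = 0"
    and T: "a0 * a7 + a2 * a5 - a1 * a6 - a3 * a4 = 0"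
    by (auto simp: A cl_N_def cl_T_def)
  have KA: "K = a0^2 + a2^2 + a4^2 + a6^2" by (simp add: K_def A)
  have Kpos: "K \<noteq> 0"
  proof
    assume "K = 0"
    hence 1: "a0 = 0 \<and> a2 = 0 \<and> a4 = 0 \<and> a6 = 0" using KA sq4 by metis
    hence "a1^2 + a3^2 + a5^2 + a7^2 = 0" using N by simp
    hence "a1 = 0 \<and> a3 = 0 \<and> a5 = 0 \<and> a7 = 0" using sq4 by metis
    with 1 show False using assms(1) A by (simp add: cl_zero_def)
  qed
  define r where "r = 1 / (4 * K)"
  have r: "r * (4 * (a0^2 + a2^2 + a4^2 + a6^2)) = 1" using Kpos unfolding r_def KA by simp
  have X: "x = CL (r*a0) (r*a1) (r*(-a2)) (r*a3) (r*(-a4)) (r*a5) (r*(-a6)) (r*(-a7))"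
    unfolding x_def r_def[symmetric] by (simp add: A cl_scale_def cl_prime_def)
  show ?thesis unfolding X A
    apply (simp add: cl_prime_def)
    apply (intro conjI)
    using N T r by algebra+
qed

end
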